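(* Let $n\ge2$, $d\ge1$, $\tau>0$, $\sigma>0$, with $\mu^\star_1,\mu^\star_2\stackrel{\mathrm{i.i.d.}}{\sim}\mathcal N(0,\tau^2I_d)$, $\xi_1,\dots,\xi_n\stackrel{\mathrm{i.i.d.}}{\sim}\mathcal N(0,\sigma^2I_d)$ independent, fixed labels $z^\star_i\in\{1,2\}$ with both classes $S^\star_\ell=\{i:z^\star_i=\ell\}$ nonempty, $x_i=\mu^\star_{z^\star_i}+\xi_i$, and a fixed partition $\{C_1,C_2\}$ of $[n]$ into nonempty sets. Fix $i\in C_j\cap S^\star_\ell$ and let $\alpha=2\tau^2(1-R^\ell_j)^2+(1-1/|C_j|)\sigma^2$. Then, over all feasible values of $R^\ell_j$, $\alpha$ is maximized at the smallest feasible purity $R^\ell_j=1/|C_j|$, in which case $\|x_i-\widehat\mu_j\|^2\sim A\,\chi^2_d$ with $$A=\Bigl(1-\tfrac1{|C_j|}\Bigr)\sigma^2+\frac{2\tau^2(|C_j|-1)^2}{|C_j|^2},$$ and for all feasible $R^\ell_j$, $\alpha\le A$.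
   Context: $R^\ell_j=|C_j\cap S^\star_\ell|/|C_j|$; $\widehat\mu_j=|C_j|^{-1}\sum_{k\in C_j}x_k$. "$Y\sim a\chi^2_d$" means $Y/a$ is chi-squared with $d$ degrees of freedom. *)

theory Defs
  imports "HOL-Probability.Probability"
begin

definition chi2_density :: "nat \<Rightarrow> real \<Rightarrow> real" where
  "chi2_density d y =
     (if y > 0 then y powr (real d / 2 - 1) * exp (- y / 2) / (2 powr (real d / 2) * Gamma (real d / 2))
      else 0)"

definition scaled_chi2 :: "'a measure \<Rightarrow> ('a \<Rightarrow> real) \<Rightarrow> real \<Rightarrow> nat \<Rightarrow> bool" where
  "scaled_chi2 M Y a d \<longleftrightarrow> Y \<in> borel_measurable M \<and>
     distr M borel Y = distr (density lborel (\<lambda>y. ennreal (chi2_density d y))) borel (\<lambda>y. a * y)"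

end

theory Submission
  imports Defs
begin


lemma chi2_nonneg[simp]: "0 < d \<Longrightarrow> 0 \<le> chi2_density d y"
  by (auto simp: chi2_density_def intro!: divide_nonneg_nonneg mult_nonneg_nonneg Gamma_real_nonneg)

lemma chi2_measurable[measurable]: "chi2_density d \<in> borel_measurable borel"
  unfolding chi2_density_def by measurable

lemma chi2_integral:
  assumes "d > 0"
  shows "(\<integral>\<^sup>+y. ennreal (chi2_density d y) \<partial>lborel) = 1"
proof -
  define k where "k = real d / 2"
  have k: "k > 0" using assms by (simp add: k_def)
  have G: "Gamma k > 0" using k by (simp add: Gamma_real_pos)
  have pt: "2 * chi2_density d (2 * x) = (1 / Gamma k) * (indicator {0..} x * x powr (k - 1) / exp x)" for x :: real
  proof (cases "x > 0")
    case True
    have "(2 * x) powr (k - 1) = 2 powr k / 2 * x powr (k - 1)"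
      using True by (simp add: powr_mult powr_diff)
    then show ?thesis using True G
      by (simp add: chi2_density_def k_def[symmetric] indicator_def exp_minus field_simps)
  next
    case False
    then show ?thesis by (auto simp: chi2_density_def indicator_def)
  qed
  have "(\<integral>\<^sup>+y. ennreal (chi2_density d y) \<partial>lborel)
      = ennreal \<bar>2\<bar> * (\<integral>\<^sup>+x. ennreal (chi2_density d (0 + 2 * x)) \<partial>lborel)"
    by (rule nn_integral_real_affine) auto
  also have "\<dots> = (\<integral>\<^sup>+x. ennreal (1 / Gamma k) * ennreal (indicator {0..} x * x powr (k - 1) / exp x) \<partial>lborel)"
  proof (subst nn_integral_cmult[symmetric], simp, rule nn_integral_cong)
    fix x :: real
    have "ennreal \<bar>2\<bar> * ennreal (chi2_density d (0 + 2 * x)) = ennreal (2 * chi2_density d (2 * x))"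
      using assms by (simp add: ennreal_mult)
    also have "\<dots> = ennreal (1 / Gamma k) * ennreal (indicator {0..} x * x powr (k - 1) / exp x)"
      unfolding pt using G by (subst ennreal_mult) auto
    finally show "ennreal \<bar>2\<bar> * ennreal (chi2_density d (0 + 2 * x)) = ennreal (1 / Gamma k) * ennreal (indicator {0..} x * x powr (k - 1) / exp x)" .
  qed
  also have "\<dots> = ennreal (1 / Gamma k) * Gamma k"
    by (subst nn_integral_cmult) (auto simp: Gamma_conv_nn_integral_real[OF k])
  also have "\<dots> = 1" using G by (simp flip: ennreal_mult)
  finally show ?thesis .
qed



lemma chi2_conv_pointwise:
  fixes x t :: real
  assumes a: "a > 0" and b: "b > 0" and x: "x > 0"
  shows "x * (chi2_density a (x - x * t) * chi2_density b (x * t)) =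
    ((2 powr (real (a + b) / 2) * Gamma (real (a + b) / 2)) /
      ((2 powr (real a / 2) * Gamma (real a / 2)) * (2 powr (real b / 2) * Gamma (real b / 2))))
    * chi2_density (a + b) x
    * (if 0 < t \<and> t < 1 then (1 - t) powr (real a / 2 - 1) * t powr (real b / 2 - 1) else 0)"
proof (cases "0 < t \<and> t < 1")
  case True
  define p where "p = real a / 2"
  define q where "q = real b / 2"
  have p: "p > 0" and q: "q > 0" using a b by (auto simp: p_def q_def)
  have ab: "real (a + b) / 2 = p + q" by (simp add: p_def q_def add_divide_distrib)
  have Gp: "Gamma p > 0" and Gq: "Gamma q > 0" and Gpq: "Gamma (p + q) > 0"
    using p q by (auto simp: Gamma_real_pos)
  have e1: "(x - x * t) powr (p - 1) = x powr (p - 1) * (1 - t) powr (p - 1)"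
    using True x by (subst powr_mult[symmetric]) (auto simp: algebra_simps)
  have e2: "(x * t) powr (q - 1) = x powr (q - 1) * t powr (q - 1)"
    using True x by (simp add: powr_mult)
  have e3: "x * (x powr (p - 1) * x powr (q - 1)) = x powr (p + q - 1)"
    using x by (simp add: powr_add[symmetric] powr_mult_base)
  have e4: "exp (- (x - x * t) / 2) * exp (- (x * t) / 2) = exp (- x / 2)"
    by (simp add: exp_add[symmetric] field_simps)
  have "x * (chi2_density a (x - x * t) * chi2_density b (x * t)) =
        x * ((x - x * t) powr (p - 1) * exp (- (x - x * t) / 2) / (2 powr p * Gamma p)) *
            ((x * t) powr (q - 1) * exp (- (x * t) / 2) / (2 powr q * Gamma q))"
    using True x by (simp add: chi2_density_def p_def q_def mult_pos_pos)
  also have "\<dots> = (x * (x powr (p - 1) * x powr (q - 1))) * (exp (- (x - x * t) / 2) * exp (- (x * t) / 2))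
       * ((1 - t) powr (p - 1) * t powr (q - 1)) / ((2 powr p * Gamma p) * (2 powr q * Gamma q))"
    unfolding e1 e2 by (simp add: field_simps)
  also have "\<dots> = x powr (p + q - 1) * exp (- x / 2)
       * ((1 - t) powr (p - 1) * t powr (q - 1)) / ((2 powr p * Gamma p) * (2 powr q * Gamma q))"
    unfolding e3 e4 ..
  also have "\<dots> = ((2 powr (p + q) * Gamma (p + q)) / ((2 powr p * Gamma p) * (2 powr q * Gamma q)))
    * (x powr (p + q - 1) * exp (- x / 2) / (2 powr (p + q) * Gamma (p + q)))
    * ((1 - t) powr (p - 1) * t powr (q - 1))"
    using Gp Gq Gpq by (simp add: field_simps)
  finally show ?thesis using True x
    unfolding chi2_density_def ab p_def[symmetric] q_def[symmetric] by simp
next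
  case False
  then have "t \<le> 0 \<or> t \<ge> 1" by auto
  then have z: "chi2_density a (x - x * t) * chi2_density b (x * t) = 0"
  proof
    assume "t \<le> 0" then have "x * t \<le> 0" using x by (simp add: mult_nonneg_nonpos)
    then show ?thesis by (simp add: chi2_density_def)
  next
    assume "t \<ge> 1" then have "x - x * t \<le> 0" using x
      by (metis diff_ge_0_iff_ge mult.right_neutral mult_left_mono less_imp_le diff_le_0_iff_le)
    then show ?thesis by (simp add: chi2_density_def)
  qed
  show ?thesis by (simp only: if_not_P[OF False] mult_zero_right z)
qed



lemma chi2_conv:
  assumes a: "a > 0" and b: "b > 0"
  shows "\<exists>K. \<forall>x. (\<integral>\<^sup>+y. ennreal (chi2_density a (x - y)) * ennreal (chi2_density b y) \<partial>lborel)
              = K * ennreal (chi2_density (a + b) x)"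
proof -
  define C where "C = ((2 powr (real (a + b) / 2) * Gamma (real (a + b) / 2)) /
      ((2 powr (real a / 2) * Gamma (real a / 2)) * (2 powr (real b / 2) * Gamma (real b / 2))))"
  define h where "h = (\<lambda>t::real. if 0 < t \<and> t < 1 then (1 - t) powr (real a / 2 - 1) * t powr (real b / 2 - 1) else 0)"
  have C: "C \<ge> 0" unfolding C_def using a b
    by (intro divide_nonneg_nonneg mult_nonneg_nonneg) (auto intro: Gamma_real_nonneg)
  have h: "h t \<ge> 0" for t by (simp add: h_def)
  have hm[measurable]: "h \<in> borel_measurable borel" unfolding h_def by measurable
  define I where "I = (\<integral>\<^sup>+t. ennreal (h t) \<partial>lborel)"
  show ?thesis
  proof (intro exI allI)
    fix x :: real
    show "(\<integral>\<^sup>+y. ennreal (chi2_density a (x - y)) * ennreal (chi2_density b y) \<partial>lborel)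
              = (ennreal C * I) * ennreal (chi2_density (a + b) x)"
    proof (cases "x > 0")
      case True
      have "(\<integral>\<^sup>+y. ennreal (chi2_density a (x - y)) * ennreal (chi2_density b y) \<partial>lborel)
          = (\<integral>\<^sup>+y. ennreal (chi2_density a (x - y) * chi2_density b y) \<partial>lborel)"
        using a b by (simp add: ennreal_mult)
      also have "\<dots> = ennreal \<bar>x\<bar> * (\<integral>\<^sup>+t. ennreal (chi2_density a (x - (0 + x * t)) * chi2_density b (0 + x * t)) \<partial>lborel)"
        using True by (intro nn_integral_real_affine) auto
      also have "\<dots> = (\<integral>\<^sup>+t. ennreal (x * (chi2_density a (x - x * t) * chi2_density b (x * t))) \<partial>lborel)"
        using True a b by (subst nn_integral_cmult[symmetric]) (auto simp: ennreal_mult)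
      also have "\<dots> = (\<integral>\<^sup>+t. ennreal (C * chi2_density (a + b) x) * ennreal (h t) \<partial>lborel)"
      proof (intro nn_integral_cong)
        fix t :: real
        have "ennreal (C * chi2_density (a + b) x) * ennreal (h t) = ennreal (C * chi2_density (a + b) x * h t)"
          using C h a b by (subst ennreal_mult) auto
        then show "ennreal (x * (chi2_density a (x - x * t) * chi2_density b (x * t))) = ennreal (C * chi2_density (a + b) x) * ennreal (h t)"
          unfolding chi2_conv_pointwise[OF a b True] C_def h_def by simp
      qed
      also have "\<dots> = ennreal (C * chi2_density (a + b) x) * I"
        unfolding I_def by (rule nn_integral_cmult) simp
      finally show ?thesis using C a b by (simp add: ennreal_mult mult_ac)
    next
      case False
      have z: "ennreal (chi2_density a (x - y)) * ennreal (chi2_density b y) = 0" for y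
        using False by (cases "y > 0") (auto simp: chi2_density_def)
      have "chi2_density (a + b) x = 0" using False by (simp add: chi2_density_def)
      then show ?thesis by (simp add: z)
    qed
  qed
qed

lemma (in prob_space) chi2_sum:
  assumes a: "a > 0" and b: "b > 0"
  assumes indep: "indep_var borel X borel Y"
  assumes X: "distributed M lborel X (\<lambda>y. ennreal (chi2_density a y))"
  assumes Y: "distributed M lborel Y (\<lambda>y. ennreal (chi2_density b y))"
  shows "distributed M lborel (\<lambda>\<omega>. X \<omega> + Y \<omega>) (\<lambda>y. ennreal (chi2_density (a + b) y))"
proof -
  obtain K where K: "\<And>x. (\<integral>\<^sup>+y. ennreal (chi2_density a (x - y)) * ennreal (chi2_density b y) \<partial>lborel)
              = K * ennreal (chi2_density (a + b) x)"
    using chi2_conv[OF a b] by blast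
  have D: "distributed M lborel (\<lambda>\<omega>. X \<omega> + Y \<omega>) (\<lambda>x. K * ennreal (chi2_density (a + b) x))"
    using distributed_convolution[OF indep X Y] unfolding K .
  have "emeasure (density lborel (\<lambda>x. K * ennreal (chi2_density (a + b) x))) UNIV = 1"
  proof -
    have "emeasure (density lborel (\<lambda>x. K * ennreal (chi2_density (a + b) x))) UNIV
        = emeasure (distr M lborel (\<lambda>\<omega>. X \<omega> + Y \<omega>)) UNIV"
      using distributed_distr_eq_density[OF D] by simp
    also have "\<dots> = 1"
      using distributed_measurable[OF D] by (simp add: emeasure_distr emeasure_space_1)
    finally show ?thesis .
  qed
  moreover have "emeasure (density lborel (\<lambda>x. K * ennreal (chi2_density (a + b) x))) UNIV = K"
    using D a b
    by (simp add: emeasure_density nn_integral_cmult chi2_integral distributed_borel_measurable)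
  ultimately have "K = 1" by simp
  then show ?thesis using D by simp
qed



lemma chi2_one_sq:
  fixes t :: real assumes "t > 0"
  shows "chi2_density 1 (t\<^sup>2) * (2 * t) = 2 * normal_density 0 1 t"
proof -
  have "(t\<^sup>2) powr (real 1 / 2 - 1) = inverse t"
  proof -
    have "(t\<^sup>2) powr (real 1 / 2 - 1) = (t\<^sup>2) powr (- (1/2))" by simp
    also have "\<dots> = inverse (sqrt (t\<^sup>2))" using assms by (simp add: powr_minus powr_half_sqrt)
    also have "\<dots> = inverse t" using assms by simp
    finally show ?thesis .
  qed
  moreover have "sqrt (2 * pi) = sqrt 2 * sqrt pi" by (simp add: real_sqrt_mult)
  ultimately show ?thesis using assms
    by (simp add: chi2_density_def normal_density_def Gamma_one_half_real powr_half_sqrt field_simps)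
qed

lemma sym_split:
  fixes u :: "real \<Rightarrow> real"
  assumes um[measurable]: "u \<in> borel_measurable borel" and nn: "\<And>t. u t \<ge> 0"
    and ev: "\<And>t. u (- t) = u t" and s: "s \<ge> 0"
  shows "(\<integral>\<^sup>+t. ennreal (u t * indicator {-s..s} t) \<partial>lborel)
       = (\<integral>\<^sup>+t. ennreal (2 * u t * indicator {0<..s} t) \<partial>lborel)"
proof -
  have pt: "ennreal (u t * indicator {-s..s} t) =
      ennreal (u t * indicator {-s..<0} t) + ennreal (u t * indicator {0<..s} t) + ennreal (u t * indicator {0} t)" for t
    using s nn[of t] by (auto simp: indicator_def)
  have "(\<integral>\<^sup>+t. ennreal (u t * indicator {-s..s} t) \<partial>lborel) =
      (\<integral>\<^sup>+t. ennreal (u t * indicator {-s..<0} t) \<partial>lborel) + (\<integral>\<^sup>+t. ennreal (u t * indicator {0<..s} t) \<partial>lborel)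
      + (\<integral>\<^sup>+t. ennreal (u t * indicator {0} t) \<partial>lborel)"
    unfolding pt by (subst nn_integral_add; simp)+
  also have "(\<integral>\<^sup>+t. ennreal (u t * indicator {0} t) \<partial>lborel) = 0"
    by (rule nn_integral_zero', rule AE_I[where N="{0}"]) (auto simp: indicator_def)
  also have "(\<integral>\<^sup>+t. ennreal (u t * indicator {-s..<0} t) \<partial>lborel) =
       ennreal \<bar>-1\<bar> * (\<integral>\<^sup>+t. ennreal (u (0 + -1 * t) * indicator {-s..<0} (0 + -1 * t)) \<partial>lborel)"
    by (intro nn_integral_real_affine) auto
  also have "\<dots> = (\<integral>\<^sup>+t. ennreal (u t * indicator {0<..s} t) \<partial>lborel)"
    using ev by (auto intro!: nn_integral_cong simp: indicator_def)
  also have "(\<integral>\<^sup>+t. ennreal (u t * indicator {0<..s} t) \<partial>lborel) + (\<integral>\<^sup>+t. ennreal (u t * indicator {0<..s} t) \<partial>lborel) + 0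
      = (\<integral>\<^sup>+t. ennreal (u t * indicator {0<..s} t) + ennreal (u t * indicator {0<..s} t) \<partial>lborel)"
    by (subst nn_integral_add) auto
  also have "\<dots> = (\<integral>\<^sup>+t. ennreal (2 * u t * indicator {0<..s} t) \<partial>lborel)"
    using nn by (intro nn_integral_cong) (auto simp: indicator_def simp flip: ennreal_plus)
  finally show ?thesis .
qed



lemma (in prob_space) chi2_one:
  assumes X: "distributed M lborel X (\<lambda>x. ennreal (normal_density 0 1 x))"
  shows "distributed M lborel (\<lambda>\<omega>. (X \<omega>)\<^sup>2) (\<lambda>y. ennreal (chi2_density 1 y))"
proof -
  have Xm[measurable]: "X \<in> measurable M borel"
    using distributed_measurable[OF X] by simp
  let ?M1 = "distr M lborel (\<lambda>\<omega>. (X \<omega>)\<^sup>2)"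
  let ?M2 = "density lborel (\<lambda>y. ennreal (chi2_density 1 y))"
  have f1: "finite_borel_measure ?M1"
    unfolding finite_borel_measure_def finite_borel_measure_axioms_def
    by (auto intro!: finite_measure_distr)
  have "emeasure ?M2 (space ?M2) = 1"
    by (simp add: emeasure_density chi2_integral)
  then have f2: "finite_borel_measure ?M2"
    unfolding finite_borel_measure_def finite_borel_measure_axioms_def
    by (auto intro!: finite_measureI)
  have em: "emeasure ?M1 {..x} = emeasure ?M2 {..x}" for x
  proof -
    have "emeasure ?M1 {..x} = emeasure M (X -` {t. t\<^sup>2 \<le> x} \<inter> space M)"
      by (subst emeasure_distr) (auto intro!: arg_cong2[where f=emeasure])
    also have "\<dots> = emeasure (distr M lborel X) {t. t\<^sup>2 \<le> x}"
      by (subst emeasure_distr) auto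
    also have "\<dots> = emeasure (density lborel (\<lambda>x. ennreal (normal_density 0 1 x))) {t. t\<^sup>2 \<le> x}"
      using distributed_distr_eq_density[OF X] by simp
    also have "\<dots> = (\<integral>\<^sup>+t. ennreal (normal_density 0 1 t) * indicator {t. t\<^sup>2 \<le> x} t \<partial>lborel)"
      by (subst emeasure_density) auto
    finally have L: "emeasure ?M1 {..x} = (\<integral>\<^sup>+t. ennreal (normal_density 0 1 t) * indicator {t. t\<^sup>2 \<le> x} t \<partial>lborel)" .
    have R: "emeasure ?M2 {..x} = (\<integral>\<^sup>+t. ennreal (chi2_density 1 t) * indicator {..x} t \<partial>lborel)"
      by (subst emeasure_density) auto
    show ?thesis
    proof (cases "x < 0")
      case True
      have "{t::real. t\<^sup>2 \<le> x} = {}" using True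
        by (auto simp: not_le) (meson le_less_trans not_less zero_le_power2)
      then have l0: "emeasure ?M1 {..x} = 0" unfolding L by simp
      have z: "ennreal (chi2_density 1 t) * indicator {..x} t = 0" for t
        using True by (auto simp: indicator_def chi2_density_def)
      have "emeasure ?M2 {..x} = 0" unfolding R z by simp
      then show ?thesis using l0 by simp
    next
      case False
      define s where "s = sqrt x"
      have s: "s \<ge> 0" "s\<^sup>2 = x" using False by (auto simp: s_def)
      have set: "{t::real. t\<^sup>2 \<le> x} = {-s..s}"
      proof -
        have "t\<^sup>2 \<le> x \<longleftrightarrow> \<bar>t\<bar> \<le> s" for t :: real
          unfolding s_def by (metis real_sqrt_abs real_sqrt_le_iff)
        then show ?thesis unfolding set_eq_iff mem_Collect_eq atLeastAtMost_iff
          by (metis abs_le_iff minus_le_iff)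
      qed
      have "emeasure ?M1 {..x} = (\<integral>\<^sup>+t. ennreal (normal_density 0 1 t * indicator {-s..s} t) \<partial>lborel)"
        unfolding L set by (intro nn_integral_cong) (auto simp: indicator_def)
      also have "\<dots> = (\<integral>\<^sup>+t. ennreal (2 * normal_density 0 1 t * indicator {0<..s} t) \<partial>lborel)"
        by (rule sym_split) (auto simp: s normal_density_def)
      finally have L2: "emeasure ?M1 {..x} = (\<integral>\<^sup>+t. ennreal (2 * normal_density 0 1 t * indicator {0<..s} t) \<partial>lborel)" .
      have "emeasure ?M2 {..x} = (\<integral>\<^sup>+t. ennreal (chi2_density 1 t * indicator {0^2..s^2} t) \<partial>lborel)"
        unfolding R s using False by (intro nn_integral_cong) (auto simp: indicator_def chi2_density_def)
      also have "\<dots> = (\<integral>\<^sup>+t. ennreal (chi2_density 1 (t^2) * (2 * t) * indicator {0..s} t) \<partial>lborel)"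
        by (rule nn_integral_substitution[where f="chi2_density 1" and g="\<lambda>t. t^2" and g'="\<lambda>t. 2*t"
              and a=0 and b=s])
           (auto simp: s set_borel_measurable_def intro!: derivative_eq_intros continuous_intros)
      also have "\<dots> = (\<integral>\<^sup>+t. ennreal (2 * normal_density 0 1 t * indicator {0<..s} t) \<partial>lborel)"
      proof (intro nn_integral_cong)
        fix t :: real
        show "ennreal (chi2_density 1 (t^2) * (2 * t) * indicator {0..s} t) = ennreal (2 * normal_density 0 1 t * indicator {0<..s} t)"
        proof (cases "0 < t \<and> t \<le> s")
          case True
          have i1: "indicator {0..s} t = (1::real)" and i2: "indicator {0<..s} t = (1::real)"
            using True by (auto simp: indicator_def)
          show ?thesis unfolding i1 i2 mult_1_right chi2_one_sq[of t, OF conjunct1[OF True]] ..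
        next
          case False
          then have "t \<le> 0 \<or> t > s" by auto
          then show ?thesis by (auto simp: indicator_def)
        qed
      qed
      finally show ?thesis using L2 by simp
    qed
  qed
  have "?M1 = ?M2"
    by (rule cdf_unique'[OF f1 f2]) (auto simp: cdf_def measure_def em)
  then show ?thesis
    unfolding distributed_def by auto
qed



lemma (in prob_space) chi2_sum_set:
  assumes "finite I" "I \<noteq> {}" "indep_vars (\<lambda>_. borel) Z I"
    "\<And>i. i \<in> I \<Longrightarrow> distributed M lborel (Z i) (\<lambda>x. ennreal (normal_density 0 1 x))"
  shows "distributed M lborel (\<lambda>\<omega>. \<Sum>i\<in>I. (Z i \<omega>)\<^sup>2) (\<lambda>y. ennreal (chi2_density (card I) y))"
  using assms
proof (induct I rule: finite_ne_induct)
  case (singleton i)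
  then show ?case using chi2_one[of "Z i"] by simp
next
  case (insert i I)
  have ind2: "indep_vars (\<lambda>_. borel) (\<lambda>i \<omega>. (Z i \<omega>)\<^sup>2) (insert i I)"
    by (rule indep_vars_compose2[OF insert.prems(1)]) auto
  have ind: "indep_var borel (\<lambda>\<omega>. (Z i \<omega>)\<^sup>2) borel (\<lambda>\<omega>. \<Sum>j\<in>I. (Z j \<omega>)\<^sup>2)"
    using indep_vars_sum[OF insert.hyps(1) insert.hyps(3) ind2] .
  have IH: "distributed M lborel (\<lambda>\<omega>. \<Sum>i\<in>I. (Z i \<omega>)\<^sup>2) (\<lambda>y. ennreal (chi2_density (card I) y))"
    using insert.hyps(4) insert.prems by (auto intro: indep_vars_subset)
  have one: "distributed M lborel (\<lambda>\<omega>. (Z i \<omega>)\<^sup>2) (\<lambda>y. ennreal (chi2_density 1 y))"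
    using chi2_one[of "Z i"] insert.prems by simp
  have cI: "card I > 0" using insert.hyps by auto
  have "distributed M lborel (\<lambda>\<omega>. (Z i \<omega>)\<^sup>2 + (\<Sum>j\<in>I. (Z j \<omega>)\<^sup>2)) (\<lambda>y. ennreal (chi2_density (1 + card I) y))"
    by (rule chi2_sum[OF _ cI ind one IH]) simp
  then show ?case using insert.hyps by simp
qed

lemma (in prob_space) normal_lincomb:
  assumes "finite K" "K \<noteq> {}" "indep_vars (\<lambda>_. borel) Y K"
   "\<And>k. k \<in> K \<Longrightarrow> distributed M lborel (Y k) (\<lambda>x. ennreal (normal_density 0 (s k) x))"
   "\<And>k. k \<in> K \<Longrightarrow> s k > 0" "\<And>k. k \<in> K \<Longrightarrow> a k \<noteq> 0"
  shows "distributed M lborel (\<lambda>\<omega>. \<Sum>k\<in>K. a k * Y k \<omega>) (\<lambda>x. ennreal (normal_density 0 (sqrt (\<Sum>k\<in>K. (a k * s k)\<^sup>2)) x))"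
proof -
  have "distributed M lborel (\<lambda>\<omega>. \<Sum>k\<in>K. a k * Y k \<omega>) (normal_density (\<Sum>k\<in>K. 0) (sqrt (\<Sum>k\<in>K. (\<bar>a k\<bar> * s k)\<^sup>2)))"
  proof (rule sum_indep_normal[where X="\<lambda>k \<omega>. a k * Y k \<omega>" and \<mu>="\<lambda>_. 0" and \<sigma>="\<lambda>k. \<bar>a k\<bar> * s k"])
    show "indep_vars (\<lambda>i. borel) (\<lambda>k \<omega>. a k * Y k \<omega>) K"
      by (rule indep_vars_compose2[OF assms(3)]) auto
    fix k assume k: "k \<in> K"
    show "0 < \<bar>a k\<bar> * s k" using assms(5,6)[OF k] by simp
    show "distributed M lborel (\<lambda>\<omega>. a k * Y k \<omega>) (\<lambda>x. ennreal (normal_density 0 (\<bar>a k\<bar> * s k) x))"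
      using normal_density_affine[OF assms(4)[OF k] assms(5)[OF k] assms(6)[OF k], of 0] by simp
  qed (use assms in auto)
  then show ?thesis by (simp add: power_mult_distrib)
qed



lemma sum_times_singleton:
  "finite V \<Longrightarrow> (\<Sum>p\<in>V \<times> {c}. f p) = (\<Sum>v\<in>V. f (v, c))"
proof -
  have "V \<times> {c} = (\<lambda>v. (v, c)) ` V" by auto
  moreover have "inj_on (\<lambda>v. (v, c)) V" by (auto simp: inj_on_def)
  ultimately show ?thesis by (simp add: sum.reindex)
qed

lemma (in prob_space) main_chi2:
  fixes mu xi :: "nat \<Rightarrow> 'a \<Rightarrow> real ^ 'd" and z :: "nat \<Rightarrow> nat" and C :: "nat set"
    and tau sigma :: real and c n i l l' :: nat
  assumes tau: "tau > 0" and sigma: "sigma > 0"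
    and mu_gauss: "\<And>m c. m \<in> {1,2} \<Longrightarrow> distributed M lborel (\<lambda>\<omega>. mu m \<omega> $ c) (normal_density 0 tau)"
    and xi_gauss: "\<And>k c. k \<in> {1..n} \<Longrightarrow> distributed M lborel (\<lambda>\<omega>. xi k \<omega> $ c) (normal_density 0 sigma)"
    and indep: "indep_vars (\<lambda>_. borel)
                  (\<lambda>(v, c) \<omega>. (case v of Inl m \<Rightarrow> mu m \<omega> | Inr k \<Rightarrow> xi k \<omega>) $ c)
                  ((Inl ` {1,2} \<union> Inr ` {1..n}) \<times> (UNIV :: 'd set))"
    and CS: "C \<subseteq> {1..n}" and iC: "i \<in> C" and zi: "z i = l" and l: "l \<in> {1,2}"
    and l': "l' \<in> {1,2}" "l' \<noteq> l"
    and zk: "\<And>k. k \<in> C \<Longrightarrow> k \<noteq> i \<Longrightarrow> z k = l'"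
    and c: "c = card C" "c \<ge> 2"
  shows "scaled_chi2 M (\<lambda>\<omega>. (norm (mu (z i) \<omega> + xi i \<omega> - (1 / real c) *\<^sub>R (\<Sum>k\<in>C. mu (z k) \<omega> + xi k \<omega>)))\<^sup>2)
     ((1 - 1 / real c) * sigma\<^sup>2 + 2 * tau\<^sup>2 * (real c - 1)\<^sup>2 / (real c)\<^sup>2) CARD('d)"
proof -
  define A where "A = (1 - 1 / real c) * sigma\<^sup>2 + 2 * tau\<^sup>2 * (real c - 1)\<^sup>2 / (real c)\<^sup>2"
  have rc: "real c \<ge> 2" using c by simp
  have A: "A > 0" unfolding A_def using rc sigma tau
    by (intro add_pos_nonneg mult_pos_pos) (auto simp: field_simps)
  define W where "W = (\<lambda>(v, c) \<omega>. (case v of Inl m \<Rightarrow> mu m \<omega> | Inr k \<Rightarrow> xi k \<omega>) $ c)"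
  have W: "W (v, c0) = (\<lambda>\<omega>. (case v of Inl m \<Rightarrow> mu m \<omega> | Inr k \<Rightarrow> xi k \<omega>) $ c0)" for v c0
    by (simp add: W_def)
  define V where "V = insert (Inl l) (insert (Inl l') (insert (Inr i) (Inr ` (C - {i}))))"
  define coef where "coef v = (case v of Inl m \<Rightarrow> if m = l then 1 - 1 / real c else - (1 - 1 / real c)
      | Inr k \<Rightarrow> if k = i then 1 - 1 / real c else - 1 / real c)" for v :: "nat + nat"
  define sd where "sd v = (case v of Inl m \<Rightarrow> tau | Inr k \<Rightarrow> sigma)" for v :: "nat + nat"
  define Z where "Z c0 \<omega> = (\<Sum>p\<in>V \<times> {c0}. (coef (fst p) / sqrt A) * W p \<omega>)" for c0 \<omega>
  have finC: "finite C" using CS finite_subset by blast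
  have finV: "finite V" using finC by (simp add: V_def)
  have sumV: "(\<Sum>v\<in>V. f v) = f (Inl l) + f (Inl l') + f (Inr i) + (\<Sum>k\<in>C - {i}. f (Inr k))" for f :: "nat + nat \<Rightarrow> real"
    using finC l' by (simp add: V_def sum.reindex image_iff)
  have cardC: "real (card (C - {i})) = real c - 1"
    using finC iC c by (simp add: of_nat_diff)
  have Vsub: "V \<times> {c0} \<subseteq> (Inl ` {1,2} \<union> Inr ` {1..n}) \<times> UNIV" for c0
    using l l' CS iC by (auto simp: V_def)
  have indW: "indep_vars (\<lambda>_. borel) W ((Inl ` {1,2} \<union> Inr ` {1..n}) \<times> (UNIV :: 'd set))"
    using indep unfolding W_def .
  have Wdist: "distributed M lborel (W p) (normal_density 0 (sd (fst p)))" if pV: "p \<in> V \<times> {c0}" for p c0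
  proof -
    obtain v where p: "p = (v, c0)" and v: "v \<in> V" using pV by (cases p) auto
    show ?thesis
    proof (cases v)
      case (Inl m)
      then have "m \<in> {1,2}" using v l l' by (auto simp: V_def)
      then show ?thesis using mu_gauss[of m c0] by (simp add: p Inl W sd_def)
    next
      case (Inr k)
      then have "k \<in> {1..n}" using v CS iC by (auto simp: V_def)
      then show ?thesis using xi_gauss[of k c0] by (simp add: p Inr W sd_def)
    qed
  qed
  have coef_nz: "coef v \<noteq> 0" for v using rc by (auto simp: coef_def split: sum.splits)
  have sd_pos: "sd v > 0" for v using tau sigma by (auto simp: sd_def split: sum.splits)
  have var: "(\<Sum>p\<in>V \<times> {c0}. (coef (fst p) / sqrt A * sd (fst p))\<^sup>2) = 1" for c0
  proof -
    have "(\<Sum>p\<in>V \<times> {c0}. (coef (fst p) / sqrt A * sd (fst p))\<^sup>2) = (\<Sum>v\<in>V. (coef v * sd v)\<^sup>2) / A"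
      using finV A by (simp add: sum_times_singleton sum_divide_distrib power_mult_distrib power_divide)
    also have "(\<Sum>v\<in>V. (coef v * sd v)\<^sup>2) = A"
      unfolding sumV using l' rc
      by (simp add: coef_def sd_def cardC A_def power2_eq_square field_simps)
    finally show ?thesis using A by simp
  qed
  have Zdist: "distributed M lborel (Z c0) (normal_density 0 1)" for c0
  proof -
    have "distributed M lborel (\<lambda>\<omega>. \<Sum>p\<in>V \<times> {c0}. coef (fst p) / sqrt A * W p \<omega>)
       (\<lambda>x. ennreal (normal_density 0 (sqrt (\<Sum>p\<in>V \<times> {c0}. (coef (fst p) / sqrt A * sd (fst p))\<^sup>2)) x))"
    proof (rule normal_lincomb)
      show "finite (V \<times> {c0})" using finV by simp
      show "V \<times> {c0} \<noteq> {}" by (simp add: V_def)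
      show "indep_vars (\<lambda>_. borel) W (V \<times> {c0})" by (rule indep_vars_subset[OF indW Vsub])
    qed (use Wdist sd_pos coef_nz A in auto)
    then show ?thesis unfolding var by (simp add: Z_def[abs_def])
  qed
  have Zind: "indep_vars (\<lambda>_. borel) Z (UNIV :: 'd set)"
  proof -
    have R: "indep_vars (\<lambda>c0. PiM (V \<times> {c0}) (\<lambda>_. borel)) (\<lambda>c0 \<omega>. restrict (\<lambda>p. W p \<omega>) (V \<times> {c0})) UNIV"
      by (rule indep_vars_restrict[OF indW], rule Vsub, auto simp: disjoint_family_on_def)
    have "indep_vars (\<lambda>_. borel) (\<lambda>c0 \<omega>. (\<lambda>f. \<Sum>p\<in>V \<times> {c0}. coef (fst p) / sqrt A * f p) (restrict (\<lambda>p. W p \<omega>) (V \<times> {c0}))) UNIV"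
      by (rule indep_vars_compose2[OF R]) measurable
    moreover have "(\<lambda>c0 \<omega>. (\<lambda>f. \<Sum>p\<in>V \<times> {c0}. coef (fst p) / sqrt A * f p) (restrict (\<lambda>p. W p \<omega>) (V \<times> {c0}))) = Z"
      by (auto simp: Z_def fun_eq_iff intro!: sum.cong)
    ultimately show ?thesis by simp
  qed
  have chi: "distributed M lborel (\<lambda>\<omega>. \<Sum>c0\<in>UNIV. (Z c0 \<omega>)\<^sup>2) (\<lambda>y. ennreal (chi2_density (card (UNIV :: 'd set)) y))"
    by (rule chi2_sum_set) (use Zind Zdist in auto)
  have comp: "(mu (z i) \<omega> + xi i \<omega> - (1 / real c) *\<^sub>R (\<Sum>k\<in>C. mu (z k) \<omega> + xi k \<omega>)) $ c0 = sqrt A * Z c0 \<omega>" for \<omega> c0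
  proof -
    have s1: "(\<Sum>k\<in>C. mu (z k) \<omega> $ c0 + xi k \<omega> $ c0) = (mu l \<omega> $ c0 + xi i \<omega> $ c0) +
        ((real c - 1) * mu l' \<omega> $ c0 + (\<Sum>k\<in>C - {i}. xi k \<omega> $ c0))"
    proof -
      have "(\<Sum>k\<in>C. mu (z k) \<omega> $ c0 + xi k \<omega> $ c0) = (mu (z i) \<omega> $ c0 + xi i \<omega> $ c0) + (\<Sum>k\<in>C - {i}. mu (z k) \<omega> $ c0 + xi k \<omega> $ c0)"
        using finC iC by (simp add: sum.remove)
      also have "(\<Sum>k\<in>C - {i}. mu (z k) \<omega> $ c0 + xi k \<omega> $ c0) = (\<Sum>k\<in>C - {i}. mu l' \<omega> $ c0 + xi k \<omega> $ c0)"
        using zk by (intro sum.cong) auto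
      also have "\<dots> = (real c - 1) * mu l' \<omega> $ c0 + (\<Sum>k\<in>C - {i}. xi k \<omega> $ c0)"
        by (simp add: sum.distrib cardC)
      finally show ?thesis using zi by simp
    qed
    have "Z c0 \<omega> = (\<Sum>v\<in>V. coef v * W (v, c0) \<omega>) / sqrt A"
      using finV by (simp add: Z_def sum_times_singleton sum_divide_distrib)
    also have "(\<Sum>v\<in>V. coef v * W (v, c0) \<omega>) = (1 - 1 / real c) * mu l \<omega> $ c0 - (1 - 1 / real c) * mu l' \<omega> $ c0
        + (1 - 1 / real c) * xi i \<omega> $ c0 - (1 / real c) * (\<Sum>k\<in>C - {i}. xi k \<omega> $ c0)"
      unfolding sumV using l' by (simp add: coef_def W sum_distrib_left sum_negf algebra_simps)
    finally have zA: "sqrt A * Z c0 \<omega> = (1 - 1 / real c) * mu l \<omega> $ c0 - (1 - 1 / real c) * mu l' \<omega> $ c0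
        + (1 - 1 / real c) * xi i \<omega> $ c0 - (1 / real c) * (\<Sum>k\<in>C - {i}. xi k \<omega> $ c0)"
      using A by simp
    have "(mu (z i) \<omega> + xi i \<omega> - (1 / real c) *\<^sub>R (\<Sum>k\<in>C. mu (z k) \<omega> + xi k \<omega>)) $ c0
        = mu l \<omega> $ c0 + xi i \<omega> $ c0 - (1 / real c) * (\<Sum>k\<in>C. mu (z k) \<omega> $ c0 + xi k \<omega> $ c0)"
      using zi by (simp add: sum_component)
    also have "\<dots> = mu l \<omega> $ c0 + xi i \<omega> $ c0 - (1 / real c) * ((mu l \<omega> $ c0 + xi i \<omega> $ c0) +
        ((real c - 1) * mu l' \<omega> $ c0 + (\<Sum>k\<in>C - {i}. xi k \<omega> $ c0)))"
      by (simp only: s1)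
    also have "\<dots> = sqrt A * Z c0 \<omega>"
      unfolding zA using rc by (simp add: field_simps)
    finally show ?thesis .
  qed
  have eq: "(norm (mu (z i) \<omega> + xi i \<omega> - (1 / real c) *\<^sub>R (\<Sum>k\<in>C. mu (z k) \<omega> + xi k \<omega>)))\<^sup>2
      = A * (\<Sum>c0\<in>UNIV. (Z c0 \<omega>)\<^sup>2)" for \<omega>
  proof -
    have nv: "(norm v)\<^sup>2 = (\<Sum>c0\<in>UNIV. (v $ c0)\<^sup>2)" for v :: "real ^ 'd"
      by (simp add: norm_vec_def L2_set_def sum_nonneg)
    show ?thesis unfolding nv comp using A by (simp add: power_mult_distrib sum_distrib_left)
  qed
  have Sm: "(\<lambda>\<omega>. \<Sum>c0\<in>UNIV. (Z c0 \<omega>)\<^sup>2) \<in> borel_measurable M"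
    using distributed_measurable[OF chi] by simp
  have D: "distr M borel (\<lambda>\<omega>. \<Sum>c0\<in>UNIV. (Z c0 \<omega>)\<^sup>2) = density lborel (\<lambda>y. ennreal (chi2_density CARD('d) y))"
    using distributed_distr_eq_density[OF chi] by (simp cong: distr_cong)
  show ?thesis
    unfolding scaled_chi2_def eq A_def[symmetric]
  proof
    show "(\<lambda>\<omega>. A * (\<Sum>c0\<in>UNIV. (Z c0 \<omega>)\<^sup>2)) \<in> borel_measurable M" using Sm by measurable
    have "distr M borel (\<lambda>\<omega>. A * (\<Sum>c0\<in>UNIV. (Z c0 \<omega>)\<^sup>2)) = distr (distr M borel (\<lambda>\<omega>. \<Sum>c0\<in>UNIV. (Z c0 \<omega>)\<^sup>2)) borel (\<lambda>y. A * y)"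
      using Sm by (subst distr_distr) (auto simp: comp_def)
    then show "distr M borel (\<lambda>\<omega>. A * (\<Sum>c0\<in>UNIV. (Z c0 \<omega>)\<^sup>2)) = distr (density lborel (\<lambda>y. ennreal (chi2_density CARD('d) y))) borel (\<lambda>y. A * y)"
      unfolding D .
  qed
qed



lemma alpha_mono:
  fixes tau B :: real and m c :: nat
  assumes "1 \<le> m" "m \<le> c"
  shows "2 * tau\<^sup>2 * (1 - real m / real c)\<^sup>2 + B \<le> 2 * tau\<^sup>2 * (1 - 1 / real c)\<^sup>2 + B"
proof -
  have c: "real c > 0" using assms by simp
  have h1: "0 \<le> 1 - real m / real c" using assms c by (simp add: field_simps)
  have h2: "1 - real m / real c \<le> 1 - 1 / real c" using assms c by (simp add: field_simps)
  have "(1 - real m / real c)\<^sup>2 \<le> (1 - 1 / real c)\<^sup>2" by (rule power_mono[OF h2 h1])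
  then show ?thesis by (simp add: mult_left_mono)
qed

theorem lemmaC2:
  fixes M :: "'a measure"
    and mu :: "nat \<Rightarrow> 'a \<Rightarrow> real ^ 'd"
    and xi :: "nat \<Rightarrow> 'a \<Rightarrow> real ^ 'd"
    and n :: nat and tau sigma :: real
    and z :: "nat \<Rightarrow> nat" and C :: "nat \<Rightarrow> nat set"
    and i j l :: nat
  assumes "prob_space M"
    and "n \<ge> 2" and "tau > 0" and "sigma > 0"
    and mu_gauss: "\<And>m c. m \<in> {1,2} \<Longrightarrow>
                  distributed M lborel (\<lambda>\<omega>. mu m \<omega> $ c) (normal_density 0 tau)"
    and xi_gauss: "\<And>k c. k \<in> {1..n} \<Longrightarrow>
                  distributed M lborel (\<lambda>\<omega>. xi k \<omega> $ c) (normal_density 0 sigma)"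
    and indep: "prob_space.indep_vars M (\<lambda>_. borel)
                  (\<lambda>(v, c) \<omega>. (case v of Inl m \<Rightarrow> mu m \<omega> | Inr k \<Rightarrow> xi k \<omega>) $ c)
                  ((Inl ` {1,2} \<union> Inr ` {1..n}) \<times> (UNIV :: 'd set))"
    and labels: "\<And>k. k \<in> {1..n} \<Longrightarrow> z k \<in> {1,2}"
    and S1: "{k \<in> {1..n}. z k = 1} \<noteq> {}" and S2: "{k \<in> {1..n}. z k = 2} \<noteq> {}"
    and part: "C 1 \<union> C 2 = {1..n}" "C 1 \<inter> C 2 = {}" "C 1 \<noteq> {}" "C 2 \<noteq> {}"
    and "j \<in> {1,2}" and "l \<in> {1,2}"
    and "i \<in> C j" and "z i = l"
  shows
    "let c = card (C j);
         S = {k \<in> {1..n}. z k = l};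
         R = real (card (C j \<inter> S)) / real c;
         alpha = (\<lambda>r::real. 2 * tau\<^sup>2 * (1 - r)\<^sup>2 + (1 - 1 / real c) * sigma\<^sup>2);
         A = (1 - 1 / real c) * sigma\<^sup>2 + 2 * tau\<^sup>2 * (real c - 1)\<^sup>2 / (real c)\<^sup>2;
         x = (\<lambda>k \<omega>. mu (z k) \<omega> + xi k \<omega>);
         muhat = (\<lambda>\<omega>. (1 / real c) *\<^sub>R (\<Sum>k\<in>C j. x k \<omega>))
     in (\<forall>m \<in> {1..c}. alpha (real m / real c) \<le> alpha (1 / real c))
        \<and> alpha (1 / real c) = A
        \<and> alpha R \<le> A
        \<and> (R = 1 / real c \<longrightarrow>
             scaled_chi2 M (\<lambda>\<omega>. (norm (x i \<omega> - muhat \<omega>))\<^sup>2) A CARD('d))"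
proof -
  interpret P: prob_space M by fact
  define c where "c = card (C j)"
  define S where "S = {k \<in> {1..n}. z k = l}"
  define m0 where "m0 = card (C j \<inter> S)"
  have CjS: "C j \<subseteq> {1..n}" using part(1) \<open>j \<in> {1,2}\<close> by auto
  have finC: "finite (C j)" using CjS finite_subset by blast
  have iS: "i \<in> C j \<inter> S" using CjS \<open>i \<in> C j\<close> \<open>z i = l\<close> by (auto simp: S_def)
  have c1: "c \<ge> 1" using finC \<open>i \<in> C j\<close> by (simp add: c_def Suc_le_eq card_gt_0_iff) blast
  have m0: "1 \<le> m0" "m0 \<le> c"
    using iS finC by (auto simp: m0_def c_def Suc_le_eq card_gt_0_iff intro!: card_mono)
  have rc: "real c > 0" using c1 by simp
  have P1: "\<forall>m \<in> {1..c}. 2 * tau\<^sup>2 * (1 - real m / real c)\<^sup>2 + (1 - 1 / real c) * sigma\<^sup>2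
        \<le> 2 * tau\<^sup>2 * (1 - 1 / real c)\<^sup>2 + (1 - 1 / real c) * sigma\<^sup>2"
  proof (intro ballI)
    fix m assume "m \<in> {1..c}"
    then have "1 \<le> m" "m \<le> c" by auto
    then show "2 * tau\<^sup>2 * (1 - real m / real c)\<^sup>2 + (1 - 1 / real c) * sigma\<^sup>2
        \<le> 2 * tau\<^sup>2 * (1 - 1 / real c)\<^sup>2 + (1 - 1 / real c) * sigma\<^sup>2"
      by (rule alpha_mono)
  qed
  have P2: "2 * tau\<^sup>2 * (1 - 1 / real c)\<^sup>2 + (1 - 1 / real c) * sigma\<^sup>2
      = (1 - 1 / real c) * sigma\<^sup>2 + 2 * tau\<^sup>2 * (real c - 1)\<^sup>2 / (real c)\<^sup>2"
    using rc by (simp add: field_simps power2_eq_square)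
  have P3: "2 * tau\<^sup>2 * (1 - real m0 / real c)\<^sup>2 + (1 - 1 / real c) * sigma\<^sup>2
      \<le> (1 - 1 / real c) * sigma\<^sup>2 + 2 * tau\<^sup>2 * (real c - 1)\<^sup>2 / (real c)\<^sup>2"
    using alpha_mono[OF m0, of tau "(1 - 1 / real c) * sigma\<^sup>2"] P2 by linarith
  have P4: "scaled_chi2 M (\<lambda>\<omega>. (norm (mu (z i) \<omega> + xi i \<omega> - (1 / real c) *\<^sub>R (\<Sum>k\<in>C j. mu (z k) \<omega> + xi k \<omega>)))\<^sup>2)
     ((1 - 1 / real c) * sigma\<^sup>2 + 2 * tau\<^sup>2 * (real c - 1)\<^sup>2 / (real c)\<^sup>2) CARD('d)"
    if R: "real m0 / real c = 1 / real c"
  proof -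
    have "m0 = 1" using R rc by (simp add: field_simps)
    then obtain y where y: "C j \<inter> S = {y}" unfolding m0_def by (rule card_1_singletonE)
    then have CS: "C j \<inter> S = {i}" using iS by auto
    define l' where "l' = 3 - l"
    have l': "l' \<in> {1,2}" "l' \<noteq> l" using \<open>l \<in> {1,2}\<close> by (auto simp: l'_def)
    have zk: "z k = l'" if "k \<in> C j" "k \<noteq> i" for k
    proof -
      have "k \<in> {1..n}" using that CjS by auto
      moreover have "k \<notin> S" using CS that by auto
      ultimately have "z k \<noteq> l" "z k \<in> {1,2}" using labels by (auto simp: S_def)
      then show ?thesis using \<open>l \<in> {1,2}\<close> by (auto simp: l'_def)
    qed
    show ?thesis
    proof (cases "c = 1")
      case False
      then have c2: "c \<ge> 2" using c1 by simp
      show ?thesis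
        by (rule P.main_chi2[where mu=mu and xi=xi and n=n and C="C j" and z=z and i=i and l=l and l'=l'
              and c=c and tau=tau and sigma=sigma, OF \<open>tau > 0\<close> \<open>sigma > 0\<close> mu_gauss xi_gauss indep CjS \<open>i \<in> C j\<close> \<open>z i = l\<close>
              \<open>l \<in> {1,2}\<close> l' zk c_def c2])
    next
      case True
      then have Cj: "C j = {i}" using finC \<open>i \<in> C j\<close> unfolding c_def
        by (metis card_1_singletonE singletonD)
      have d: "CARD('d) > 0" by simp
      have N: "prob_space (density lborel (\<lambda>y. ennreal (chi2_density CARD('d) y)))"
        by (rule prob_spaceI) (simp add: emeasure_density chi2_integral[OF d])
      have e1: "distr M borel (\<lambda>\<omega>. 0::real) = return borel 0" by simp
      have e2: "distr (density lborel (\<lambda>y. ennreal (chi2_density CARD('d) y))) borel (\<lambda>y. 0 * y) = return borel (0::real)"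
      proof -
        have z0: "(\<lambda>y::real. 0 * y) = (\<lambda>_. 0)" by (rule ext) simp
        show ?thesis unfolding z0 by (rule prob_space.distr_const[OF N]) simp
      qed
      have A0: "(1 - 1 / real c) * sigma\<^sup>2 + 2 * tau\<^sup>2 * (real c - 1)\<^sup>2 / (real c)\<^sup>2 = 0"
        using True by simp
      show ?thesis unfolding A0 using True e2 by (simp add: Cj scaled_chi2_def)
    qed
  qed
  show ?thesis
    unfolding Let_def c_def[symmetric] S_def[symmetric] m0_def[symmetric]
    using P1 P2 P3 P4 by simp
qed


end
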